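(* Let $\varphi$ be an LTL formula in PNF and let $\mathcal{A}(\varphi)=(Q,\Sigma,\delta,\alpha_0,F)$ be the alternating $\omega$-automaton with $Q=\partial^+(\varphi)$, $\delta(\psi,x)=\partial_x(\psi)$ for all $\psi\in Q$ and $x\in\Sigma$, initial states $\alpha_0=\mathrm{simp}(\varphi)$, and $F=\{\mathbf{tt}\}\cup\{\varphi_1\,\mathcal{R}\,\psi_1 \mid \varphi_1\,\mathcal{R}\,\psi_1\in Q\}$. Then $\mathcal{L}(\varphi)=\mathcal{L}(\mathcal{A}(\varphi))$ under the Büchi acceptance condition.
   Context: LTL formulae in PNF: $\varphi,\psi ::= p \mid \neg p \mid \mathbf{tt} \mid \mathbf{ff} \mid \varphi\wedge\psi \mid \varphi\vee\psi \mid \bigcirc\varphi \mid \varphi\,\mathcal{U}\,\psi \mid \varphi\,\mathcal{R}\,\psi$ with the standard semantics over $\sigma\in\Sigma^\omega$ and an interpretation $I:\Sigma\to\mathcal{P}(AP)$; $\mathcal{L}(\varphi)=\{\sigma\mid\sigma\models\varphi\}$. Temporal formula: does not start with $\wedge$ or $\vee$. Monomials $\mu,\nu$: $\mathbf{ff}$ or consistent sets of literals; $x\models\mu$ means every literal of $\mu$ holds under $I(x)$; $\mu\sqcap\nu$ is $\mathbf{ff}$ if either is $\mathbf{ff}$ or $\mu\cup\nu$ is contradictory, else $\mu\cup\nu$. $\varphi\,\dot\wedge\,\psi$ denotes formal conjunction, normalized modulo associativity, commutativity, idempotence ($\mathbf{tt}$ is the empty formal conjunction). $\mathrm{simp}(\varphi\wedge\psi)=\{\varphi'\,\dot\wedge\,\psi'\mid\varphi'\in\mathrm{simp}(\varphi),\psi'\in\mathrm{simp}(\psi)\}$,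 $\mathrm{simp}(\varphi\vee\psi)=\mathrm{simp}(\varphi)\cup\mathrm{simp}(\psi)$, $\mathrm{simp}(\varphi)=\{\varphi\}$ for temporal $\varphi$. Linear factors $\mathrm{LF}$: $\mathrm{LF}(\ell)=\{\langle\{\ell\},\mathbf{tt}\rangle\}$, $\mathrm{LF}(\mathbf{tt})=\{\langle\mathbf{tt},\mathbf{tt}\rangle\}$, $\mathrm{LF}(\mathbf{ff})=\{\}$, $\mathrm{LF}(\varphi\vee\psi)=\mathrm{LF}(\varphi)\cup\mathrm{LF}(\psi)$, $\mathrm{LF}(\varphi\wedge\psi)=\{\langle\mu\sqcap\nu,\varphi'\,\dot\wedge\,\psi'\rangle\mid\langle\mu,\varphi'\rangle\in\mathrm{LF}(\varphi),\langle\nu,\psi'\rangle\in\mathrm{LF}(\psi),\mu\sqcap\nu\neq\mathbf{ff}\}$, $\mathrm{LF}(\bigcirc\varphi)=\{\langle\mathbf{tt},\varphi'\rangle\mid\varphi'\in\mathrm{simp}(\varphi)\}$, $\mathrm{LF}(\varphi\,\mathcal{U}\,\psi)=\mathrm{LF}(\psi)\cup\{\langle\mu,\varphi'\,\dot\wedge\,(\varphi\,\mathcal{U}\,\psi)\rangle\mid\langle\mu,\varphi'\rangle\in\mathrm{LF}(\varphi)\}$, $\mathrm{LF}(\varphi\,\mathcal{R}\,\psi)=\{\langle\mu\sqcap\nu,\varphi'\,\dot\wedge\,\psi'\rangle\mid\langle\mu,\varphi'\rangle\in\mathrm{LF}(\varphi),\langle\nu,\psi'\rangle\in\mathrm{LF}(\psi),\mu\sqcap\nu\neq\mathbf{ff}\}\cup\{\langle\nu,\psi'\,\dot\wedge\,(\varphi\,\mathcal{R}\,\psi)\rangle\mid\langle\nu,\psi'\rangle\in\mathrm{LF}(\psi)\}$.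 Partial derivatives: $\partial_x(\varphi)=\{\varphi'\mid\langle\mu,\varphi'\rangle\in\mathrm{LF}(\varphi),x\models\mu\}$ for temporal $\varphi$; $\partial_x(\mathbf{tt})=\{\mathbf{tt}\}$; $\partial_x(\varphi\,\dot\wedge\,\psi)=\{\varphi'\,\dot\wedge\,\psi'\mid\varphi'\in\partial_x(\varphi),\psi'\in\partial_x(\psi)\}$. Iterated partial derivatives (subformula set): $\partial^+(\ell)=\{\ell\}$, $\partial^+(\mathbf{tt})=\{\mathbf{tt}\}$, $\partial^+(\mathbf{ff})=\{\mathbf{ff}\}$, $\partial^+(\varphi\vee\psi)=\partial^+(\varphi\wedge\psi)=\partial^+(\varphi)\cup\partial^+(\psi)$, $\partial^+(\bigcirc\varphi)=\{\bigcirc\varphi\}\cup\partial^+(\varphi)$, $\partial^+(\varphi\,\mathcal{U}\,\psi)=\{\varphi\,\mathcal{U}\,\psi\}\cup\partial^+(\varphi)\cup\partial^+(\psi)$, $\partial^+(\varphi\,\mathcal{R}\,\psi)=\{\varphi\,\mathcal{R}\,\psi\}\cup\partial^+(\varphi)\cup\partial^+(\psi)$. An alternating $\omega$-automaton $(Q,\Sigma,\delta,\alpha_0,F)$ has finite state set $Q$, initial condition $\alpha_0$ (a set of sets of states, read as a disjunction of conjunctions), transition function $\delta$ returning a set of conjunctions of states (read as a disjunction), and $F\subseteq Q$. A run on $\sigma$ is a layered digraph with nodes in $Q\times\mathbb{N}$ whose level-0 state set is in $\alpha_0$, every node at level $i+1$ has a predecessor at level $i$, and the successor set of each $(q,i)$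 is in $\delta(q,\sigma_i)$; a run is accepting if every infinite path visits $F$ infinitely often, and $\mathcal{L}(\mathcal{A})$ is the set of words with an accepting run. *)

theory Defs
  imports Main
begin

datatype 'p ltl =
    Prop 'p
  | NProp 'p
  | TT
  | FF
  | And "'p ltl" "'p ltl"
  | Or "'p ltl" "'p ltl"
  | Next "'p ltl"
  | Until "'p ltl" "'p ltl"
  | Release "'p ltl" "'p ltl"

primrec sem :: "('x \<Rightarrow> 'p set) \<Rightarrow> (nat \<Rightarrow> 'x) \<Rightarrow> nat \<Rightarrow> 'p ltl \<Rightarrow> bool" where
  "sem I w i (Prop p) = (p \<in> I (w i))"
| "sem I w i (NProp p) = (p \<notin> I (w i))"
| "sem I w i TT = True"
| "sem I w i FF = False"
| "sem I w i (And a b) = (sem I w i a \<and> sem I w i b)"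
| "sem I w i (Or a b) = (sem I w i a \<or> sem I w i b)"
| "sem I w i (Next a) = sem I w (Suc i) a"
| "sem I w i (Until a b) = (\<exists>j\<ge>i. sem I w j b \<and> (\<forall>k. i \<le> k \<and> k < j \<longrightarrow> sem I w k a))"
| "sem I w i (Release a b) = (\<forall>j\<ge>i. sem I w j b \<or> (\<exists>k. i \<le> k \<and> k < j \<and> sem I w k a))"

definition ltl_lang :: "('x \<Rightarrow> 'p set) \<Rightarrow> 'p ltl \<Rightarrow> (nat \<Rightarrow> 'x) set" where
  "ltl_lang I \<phi> = {w. sem I w 0 \<phi>}"

datatype 'p lit = Pos 'p | Neg 'p

text \<open>A monomial is ff (None) or a consistent set of literals (Some S).
  tt is the empty monomial Some {}.\<close>
type_synonym 'p monomial = "'p lit set option"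

definition consistent :: "'p lit set \<Rightarrow> bool" where
  "consistent S \<longleftrightarrow> \<not> (\<exists>p. Pos p \<in> S \<and> Neg p \<in> S)"

definition meet :: "'p monomial \<Rightarrow> 'p monomial \<Rightarrow> 'p monomial" where
  "meet \<mu> \<nu> = (case (\<mu>, \<nu>) of
      (Some a, Some b) \<Rightarrow> (if consistent (a \<union> b) then Some (a \<union> b) else None)
    | _ \<Rightarrow> None)"

primrec lit_holds :: "'p set \<Rightarrow> 'p lit \<Rightarrow> bool" where
  "lit_holds P (Pos p) = (p \<in> P)"
| "lit_holds P (Neg p) = (p \<notin> P)"

definition models :: "('x \<Rightarrow> 'p set) \<Rightarrow> 'x \<Rightarrow> 'p monomial \<Rightarrow> bool" where
  "models I x \<mu> = (case \<mu> of None \<Rightarrow> False | Some S \<Rightarrow> (\<forall>l\<in>S. lit_holds (I x) l))"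

text \<open>Formal conjunctions (normalized modulo ACI) are sets of temporal formulas;
  tt is the empty formal conjunction, so the conjunct tt is dropped.\<close>
type_synonym 'p fconj = "'p ltl set"

definition fc :: "'p ltl \<Rightarrow> 'p fconj" where
  "fc \<phi> = (if \<phi> = TT then {} else {\<phi>})"

primrec simp :: "'p ltl \<Rightarrow> 'p fconj set" where
  "simp (Prop p) = {fc (Prop p)}"
| "simp (NProp p) = {fc (NProp p)}"
| "simp TT = {fc TT}"
| "simp FF = {fc FF}"
| "simp (And a b) = {A \<union> B | A B. A \<in> simp a \<and> B \<in> simp b}"
| "simp (Or a b) = simp a \<union> simp b"
| "simp (Next a) = {fc (Next a)}"
| "simp (Until a b) = {fc (Until a b)}"
| "simp (Release a b) = {fc (Release a b)}"

primrec LF :: "'p ltl \<Rightarrow> ('p monomial \<times> 'p fconj) set" where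
  "LF (Prop p) = {(Some {Pos p}, {})}"
| "LF (NProp p) = {(Some {Neg p}, {})}"
| "LF TT = {(Some {}, {})}"
| "LF FF = {}"
| "LF (Or a b) = LF a \<union> LF b"
| "LF (And a b) = {(meet \<mu> \<nu>, A \<union> B) | \<mu> A \<nu> B.
      (\<mu>, A) \<in> LF a \<and> (\<nu>, B) \<in> LF b \<and> meet \<mu> \<nu> \<noteq> None}"
| "LF (Next a) = {(Some {}, A) | A. A \<in> simp a}"
| "LF (Until a b) = LF b \<union> {(\<mu>, A \<union> {Until a b}) | \<mu> A. (\<mu>, A) \<in> LF a}"
| "LF (Release a b) = {(meet \<mu> \<nu>, A \<union> B) | \<mu> A \<nu> B.
      (\<mu>, A) \<in> LF a \<and> (\<nu>, B) \<in> LF b \<and> meet \<mu> \<nu> \<noteq> None}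
    \<union> {(\<nu>, B \<union> {Release a b}) | \<nu> B. (\<nu>, B) \<in> LF b}"

definition pderiv :: "('x \<Rightarrow> 'p set) \<Rightarrow> 'x \<Rightarrow> 'p ltl \<Rightarrow> 'p fconj set" where
  "pderiv I x \<psi> = {A. \<exists>\<mu>. (\<mu>, A) \<in> LF \<psi> \<and> models I x \<mu>}"

text \<open>Iterated partial derivatives (subformula set).\<close>
primrec pderiv_plus :: "'p ltl \<Rightarrow> 'p ltl set" where
  "pderiv_plus (Prop p) = {Prop p}"
| "pderiv_plus (NProp p) = {NProp p}"
| "pderiv_plus TT = {TT}"
| "pderiv_plus FF = {FF}"
| "pderiv_plus (And a b) = pderiv_plus a \<union> pderiv_plus b"
| "pderiv_plus (Or a b) = pderiv_plus a \<union> pderiv_plus b"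
| "pderiv_plus (Next a) = {Next a} \<union> pderiv_plus a"
| "pderiv_plus (Until a b) = {Until a b} \<union> pderiv_plus a \<union> pderiv_plus b"
| "pderiv_plus (Release a b) = {Release a b} \<union> pderiv_plus a \<union> pderiv_plus b"

record ('q, 'x) aaut =
  states :: "'q set"
  trans :: "'q \<Rightarrow> 'x \<Rightarrow> 'q set set"
  init :: "'q set set"
  acc :: "'q set"

text \<open>A run on w: level sets V i (the nodes (q,i) with q \<in> V i) and successor sets
  E i q (the successors of node (q,i), all at level i+1).\<close>
definition is_run :: "('q, 'x) aaut \<Rightarrow> (nat \<Rightarrow> 'x) \<Rightarrow> (nat \<Rightarrow> 'q set) \<Rightarrow> (nat \<Rightarrow> 'q \<Rightarrow> 'q set) \<Rightarrow> bool" where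
  "is_run A w V E \<longleftrightarrow>
     V 0 \<in> init A \<and>
     (\<forall>i. V i \<subseteq> states A) \<and>
     (\<forall>i. \<forall>q\<in>V i. E i q \<subseteq> V (Suc i) \<and> E i q \<in> trans A q (w i)) \<and>
     (\<forall>i. \<forall>q'\<in>V (Suc i). \<exists>q\<in>V i. q' \<in> E i q)"

definition is_path :: "(nat \<Rightarrow> 'q set) \<Rightarrow> (nat \<Rightarrow> 'q \<Rightarrow> 'q set) \<Rightarrow> (nat \<Rightarrow> 'q) \<Rightarrow> bool" where
  "is_path V E p \<longleftrightarrow> p 0 \<in> V 0 \<and> (\<forall>i. p (Suc i) \<in> E i (p i))"

definition buechi_accepting :: "('q, 'x) aaut \<Rightarrow> (nat \<Rightarrow> 'q set) \<Rightarrow> (nat \<Rightarrow> 'q \<Rightarrow> 'q set) \<Rightarrow> bool" where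
  "buechi_accepting A V E \<longleftrightarrow> (\<forall>p. is_path V E p \<longrightarrow> (\<exists>\<^sub>\<infinity>i. p i \<in> acc A))"

definition aut_lang :: "('q, 'x) aaut \<Rightarrow> (nat \<Rightarrow> 'x) set" where
  "aut_lang A = {w. \<exists>V E. is_run A w V E \<and> buechi_accepting A V E}"

definition is_release :: "'p ltl \<Rightarrow> bool" where
  "is_release \<psi> \<longleftrightarrow> (\<exists>a b. \<psi> = Release a b)"

definition ltl_aut :: "('x \<Rightarrow> 'p set) \<Rightarrow> 'p ltl \<Rightarrow> ('p ltl, 'x) aaut" where
  "ltl_aut I \<phi> = \<lparr> states = pderiv_plus \<phi>,
                    trans = (\<lambda>\<psi> x. pderiv I x \<psi>),
                    init = simp \<phi>,
                    acc = {TT} \<union> {\<psi> \<in> pderiv_plus \<phi>. is_release \<psi>} \<rparr>"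

end

theory Submission
  imports Defs
begin

lemma models_meet: "models I x (meet \<mu> \<nu>) \<longleftrightarrow> models I x \<mu> \<and> models I x \<nu>"
proof (cases \<mu>; cases \<nu>)
  fix a b assume h: "\<mu> = Some a" "\<nu> = Some b"
  show ?thesis
  proof (cases "consistent (a \<union> b)")
    case True thus ?thesis using h by (auto simp: models_def meet_def)
  next
    case False
    then obtain p where p: "Pos p \<in> a \<union> b" "Neg p \<in> a \<union> b" by (auto simp: consistent_def)
    have "\<not> (models I x \<mu> \<and> models I x \<nu>)"
    proof
      assume "models I x \<mu> \<and> models I x \<nu>"
      hence "\<forall>l\<in>a \<union> b. lit_holds (I x) l" using h by (auto simp: models_def)
      hence "lit_holds (I x) (Pos p)" "lit_holds (I x) (Neg p)" using p by blast+
      thus False by simp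
    qed
    thus ?thesis using h False by (auto simp: models_def meet_def)
  qed
qed (auto simp: models_def meet_def)

lemma models_meet_ne: "models I x \<mu> \<Longrightarrow> models I x \<nu> \<Longrightarrow> meet \<mu> \<nu> \<noteq> None"
  using models_meet[of I x \<mu> \<nu>] by (cases "meet \<mu> \<nu>") (auto simp: models_def)

lemma sem_Until_unfold:
  "sem I w i (Until a b) \<longleftrightarrow> sem I w i b \<or> (sem I w i a \<and> sem I w (Suc i) (Until a b))"
proof
  assume "sem I w i (Until a b)"
  then obtain j where j: "j \<ge> i" "sem I w j b" "\<forall>k. i \<le> k \<and> k < j \<longrightarrow> sem I w k a" by auto
  show "sem I w i b \<or> (sem I w i a \<and> sem I w (Suc i) (Until a b))"
  proof (cases "j = i")
    case True thus ?thesis using j by auto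
  next
    case False
    hence "Suc i \<le> j" using j by auto
    thus ?thesis using j by auto
  qed
next
  assume h: "sem I w i b \<or> (sem I w i a \<and> sem I w (Suc i) (Until a b))"
  show "sem I w i (Until a b)"
  proof (cases "sem I w i b")
    case True thus ?thesis by auto
  next
    case False
    with h obtain j where j: "j \<ge> Suc i" "sem I w j b" "\<forall>k. Suc i \<le> k \<and> k < j \<longrightarrow> sem I w k a"
      and a: "sem I w i a" by auto
    have "\<forall>k. i \<le> k \<and> k < j \<longrightarrow> sem I w k a"
    proof (intro allI impI)
      fix k assume "i \<le> k \<and> k < j"
      thus "sem I w k a" using j a by (cases "k = i") auto
    qed
    thus ?thesis using j by (auto intro!: exI[of _ j])
  qed
qed

lemma sem_Release_unfold:
  "sem I w i (Release a b) \<longleftrightarrow> sem I w i b \<and> (sem I w i a \<or> sem I w (Suc i) (Release a b))"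
proof
  assume h: "sem I w i (Release a b)"
  have b: "sem I w i b" using h by auto
  moreover have "sem I w i a \<or> sem I w (Suc i) (Release a b)"
  proof (cases "sem I w i a")
    case False
    have "\<forall>j\<ge>Suc i. sem I w j b \<or> (\<exists>k. Suc i \<le> k \<and> k < j \<and> sem I w k a)"
    proof (intro allI impI)
      fix j assume "Suc i \<le> j"
      hence "sem I w j b \<or> (\<exists>k. i \<le> k \<and> k < j \<and> sem I w k a)" using h by auto
      thus "sem I w j b \<or> (\<exists>k. Suc i \<le> k \<and> k < j \<and> sem I w k a)"
        using False by (metis Suc_leI le_eq_less_or_eq)
    qed
    thus ?thesis by simp
  qed simp
  ultimately show "sem I w i b \<and> (sem I w i a \<or> sem I w (Suc i) (Release a b))" by simp
next
  assume h: "sem I w i b \<and> (sem I w i a \<or> sem I w (Suc i) (Release a b))"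
  show "sem I w i (Release a b)"
    unfolding sem.simps
  proof (intro allI impI)
    fix j assume j: "i \<le> j"
    show "sem I w j b \<or> (\<exists>k\<ge>i. k < j \<and> sem I w k a)"
    proof (cases "j = i")
      case True thus ?thesis using h by simp
    next
      case False
      hence "Suc i \<le> j" using j by simp
      thus ?thesis using h j False
        by (metis Suc_leD le_refl nat_less_le sem.simps(9))
    qed
  qed
qed

lemma simp_sound: "A \<in> simp c \<Longrightarrow> \<forall>\<chi>\<in>A. sem I w i \<chi> \<Longrightarrow> sem I w i c"
  by (induction c arbitrary: A) (auto simp: fc_def)

lemma simp_complete: "sem I w i c \<Longrightarrow> \<exists>A\<in>simp c. \<forall>\<chi>\<in>A. sem I w i \<chi>"
proof (induction c)
  case (And a b)
  then obtain A B where "A \<in> simp a" "B \<in> simp b" "\<forall>\<chi>\<in>A. sem I w i \<chi>" "\<forall>\<chi>\<in>B. sem I w i \<chi>" by auto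
  thus ?case by auto
qed (auto simp: fc_def)

lemma LF_sound: "(\<mu>,A) \<in> LF c \<Longrightarrow> models I (w i) \<mu> \<Longrightarrow> \<forall>\<chi>\<in>A. sem I w (Suc i) \<chi> \<Longrightarrow> sem I w i c"
proof (induction c arbitrary: \<mu> A)
  case (And a b)
  then obtain \<mu>1 A1 \<nu> B where "\<mu> = meet \<mu>1 \<nu>" "A = A1 \<union> B" "(\<mu>1,A1)\<in>LF a" "(\<nu>,B)\<in>LF b" by auto
  thus ?case using And by (simp add: models_meet)
next
  case (Next a) thus ?case by (auto simp: simp_sound)
next
  case (Until a b)
  from Until.prems(1) consider "(\<mu>,A) \<in> LF b" | A1 where "A = A1 \<union> {Until a b}" "(\<mu>,A1) \<in> LF a" by auto
  thus ?case
  proof cases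
    case 1
    hence "sem I w i b" using Until.IH(2) Until.prems by blast
    thus ?thesis by (subst sem_Until_unfold) simp
  next
    case (2 A1)
    have "sem I w i a" using Until.IH(1)[OF 2(2) Until.prems(2)] 2(1) Until.prems(3) by simp
    moreover have "sem I w (Suc i) (Until a b)" using 2 Until.prems(3) by simp
    ultimately show ?thesis by (subst sem_Until_unfold) simp
  qed
next
  case (Release a b)
  from Release.prems(1) consider (c1) \<mu>1 A1 \<nu> B where "\<mu> = meet \<mu>1 \<nu>" "A = A1 \<union> B" "(\<mu>1,A1)\<in>LF a" "(\<nu>,B)\<in>LF b"
    | (c2) B where "A = B \<union> {Release a b}" "(\<mu>,B) \<in> LF b" by auto
  thus ?case
  proof cases
    case c1 thus ?thesis using Release by (subst sem_Release_unfold) (simp add: models_meet)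
  next
    case c2 thus ?thesis using Release by (subst sem_Release_unfold) simp
  qed
qed (auto simp: models_def)

lemma LF_And_mem: "(\<mu>,A) \<in> LF a \<Longrightarrow> (\<nu>,B) \<in> LF b \<Longrightarrow> meet \<mu> \<nu> \<noteq> None \<Longrightarrow> (meet \<mu> \<nu>, A \<union> B) \<in> LF (And a b)"
  by (simp only: LF.simps mem_Collect_eq) (intro exI[of _ \<mu>] exI[of _ A] exI[of _ \<nu>] exI[of _ B] conjI refl; assumption)
lemma LF_Rel_mem1: "(\<mu>,A) \<in> LF a \<Longrightarrow> (\<nu>,B) \<in> LF b \<Longrightarrow> meet \<mu> \<nu> \<noteq> None \<Longrightarrow> (meet \<mu> \<nu>, A \<union> B) \<in> LF (Release a b)"
  by (simp only: LF.simps Un_iff mem_Collect_eq) (rule disjI1, intro exI[of _ \<mu>] exI[of _ A] exI[of _ \<nu>] exI[of _ B] conjI refl; assumption)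
lemma LF_Rel_mem2: "(\<nu>,B) \<in> LF b \<Longrightarrow> (\<nu>, B \<union> {Release a b}) \<in> LF (Release a b)"
  by (simp only: LF.simps Un_iff mem_Collect_eq) (rule disjI2, intro exI[of _ \<nu>] exI[of _ B] conjI refl; assumption)
lemma LF_Until_mem1: "(\<nu>,B) \<in> LF b \<Longrightarrow> (\<nu>, B) \<in> LF (Until a b)"
  by simp
lemma LF_Until_mem2: "(\<mu>,A) \<in> LF a \<Longrightarrow> (\<mu>, A \<union> {Until a b}) \<in> LF (Until a b)"
  by (simp only: LF.simps Un_iff mem_Collect_eq) (rule disjI2, intro exI[of _ \<mu>] exI[of _ A] conjI refl; assumption)
lemma LF_Next_mem: "A \<in> simp a \<Longrightarrow> (Some {}, A) \<in> LF (Next a)"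
  by simp

lemma LF_complete: "sem I w i c \<Longrightarrow> \<exists>\<mu> A. (\<mu>,A) \<in> LF c \<and> models I (w i) \<mu> \<and> (\<forall>\<chi>\<in>A. sem I w (Suc i) \<chi>)"
proof (induction c)
  case (And a b)
  have sa: "sem I w i a" and sb: "sem I w i b" using And.prems by auto
  obtain \<mu> A where h1: "(\<mu>,A) \<in> LF a" "models I (w i) \<mu>" "\<forall>\<chi>\<in>A. sem I w (Suc i) \<chi>"
    using And.IH(1)[OF sa] by blast
  obtain \<nu> B where h2: "(\<nu>,B) \<in> LF b" "models I (w i) \<nu>" "\<forall>\<chi>\<in>B. sem I w (Suc i) \<chi>"
    using And.IH(2)[OF sb] by blast
  have m: "meet \<mu> \<nu> \<noteq> None" using models_meet_ne[OF h1(2) h2(2)] .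
  have "(meet \<mu> \<nu>, A \<union> B) \<in> LF (And a b)" using LF_And_mem[OF h1(1) h2(1) m] .
  moreover have "models I (w i) (meet \<mu> \<nu>)" using h1(2) h2(2) by (simp add: models_meet)
  moreover have "\<forall>\<chi>\<in>A \<union> B. sem I w (Suc i) \<chi>" using h1(3) h2(3) by blast
  ultimately show ?case by blast
next
  case (Next a)
  hence "sem I w (Suc i) a" by simp
  then obtain A where A: "A \<in> simp a" "\<forall>\<chi>\<in>A. sem I w (Suc i) \<chi>" using simp_complete by blast
  have "models I (w i) (Some {})" by (simp add: models_def)
  thus ?case using LF_Next_mem[OF A(1)] A(2) by blast
next
  case (Until a b)
  show ?case
  proof (cases "sem I w i b")
    case True
    then obtain \<nu> B where "(\<nu>,B) \<in> LF b" "models I (w i) \<nu>" "\<forall>\<chi>\<in>B. sem I w (Suc i) \<chi>"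
      using Until.IH(2) by blast
    thus ?thesis using LF_Until_mem1 by blast
  next
    case False
    hence sa: "sem I w i a" and su: "sem I w (Suc i) (Until a b)" using Until.prems sem_Until_unfold by metis+
    obtain \<mu> A where h: "(\<mu>,A) \<in> LF a" "models I (w i) \<mu>" "\<forall>\<chi>\<in>A. sem I w (Suc i) \<chi>"
      using Until.IH(1)[OF sa] by blast
    have "\<forall>\<chi>\<in>A \<union> {Until a b}. sem I w (Suc i) \<chi>" using h(3) su by blast
    thus ?thesis using LF_Until_mem2[OF h(1)] h(2) by blast
  qed
next
  case (Release a b)
  have hb: "sem I w i b" using Release.prems sem_Release_unfold by metis
  obtain \<nu> B where B: "(\<nu>,B) \<in> LF b" "models I (w i) \<nu>" "\<forall>\<chi>\<in>B. sem I w (Suc i) \<chi>"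
    using Release.IH(2)[OF hb] by blast
  show ?case
  proof (cases "sem I w i a")
    case True
    obtain \<mu> A where A: "(\<mu>,A) \<in> LF a" "models I (w i) \<mu>" "\<forall>\<chi>\<in>A. sem I w (Suc i) \<chi>"
      using Release.IH(1)[OF True] by blast
    have m: "meet \<mu> \<nu> \<noteq> None" using models_meet_ne[OF A(2) B(2)] .
    have "(meet \<mu> \<nu>, A \<union> B) \<in> LF (Release a b)" using LF_Rel_mem1[OF A(1) B(1) m] .
    moreover have "models I (w i) (meet \<mu> \<nu>)" using A(2) B(2) by (simp add: models_meet)
    moreover have "\<forall>\<chi>\<in>A \<union> B. sem I w (Suc i) \<chi>" using A(3) B(3) by blast
    ultimately show ?thesis by blast
  next
    case False
    hence "sem I w (Suc i) (Release a b)" using Release.prems sem_Release_unfold by metis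
    hence "\<forall>\<chi>\<in>B \<union> {Release a b}. sem I w (Suc i) \<chi>" using B(3) by blast
    thus ?thesis using LF_Rel_mem2[OF B(1)] B(2) by blast
  qed
qed (auto simp: models_def)

lemma simp_size: "A \<in> simp c \<Longrightarrow> \<chi> \<in> A \<Longrightarrow> size \<chi> \<le> size c"
  by (induction c arbitrary: A) (fastforce simp: fc_def split: if_splits)+

lemma LF_size: "(\<mu>,A) \<in> LF c \<Longrightarrow> \<chi> \<in> A \<Longrightarrow>
   size \<chi> < size c \<or> (\<chi> = c \<and> (\<exists>a b. c = Until a b \<or> c = Release a b))"
proof (induction c arbitrary: \<mu> A)
  case (Next a) thus ?case using simp_size by fastforce
next
  case (And a b)
  then obtain \<mu>1 A1 \<nu> B where "A = A1 \<union> B" "(\<mu>1,A1)\<in>LF a" "(\<nu>,B)\<in>LF b" by auto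
  show ?case
  proof (cases "\<chi> \<in> A1")
    case True
    have "size \<chi> \<le> size a" using And.IH(1)[OF \<open>(\<mu>1,A1)\<in>LF a\<close> True] by auto
    thus ?thesis by simp
  next
    case False
    hence "\<chi> \<in> B" using \<open>A = A1 \<union> B\<close> And.prems(2) by auto
    have "size \<chi> \<le> size b" using And.IH(2)[OF \<open>(\<nu>,B)\<in>LF b\<close> \<open>\<chi> \<in> B\<close>] by auto
    thus ?thesis by simp
  qed
next
  case (Or a b)
  hence "(\<mu>,A) \<in> LF a \<or> (\<mu>,A) \<in> LF b" by simp
  thus ?case
  proof
    assume h: "(\<mu>,A) \<in> LF a"
    have "size \<chi> \<le> size a" using Or.IH(1)[OF h Or.prems(2)] by auto
    thus ?thesis by simp
  next
    assume h: "(\<mu>,A) \<in> LF b"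
    have "size \<chi> \<le> size b" using Or.IH(2)[OF h Or.prems(2)] by auto
    thus ?thesis by simp
  qed
next
  case (Until a b)
  from Until.prems(1) consider "(\<mu>,A) \<in> LF b" | A1 where "A = A1 \<union> {Until a b}" "(\<mu>,A1) \<in> LF a" by auto
  thus ?case
  proof cases
    case 1
    have "size \<chi> \<le> size b" using Until.IH(2)[OF 1 Until.prems(2)] by auto
    thus ?thesis by simp
  next
    case (2 A1)
    show ?thesis
    proof (cases "\<chi> \<in> A1")
      case True
      have "size \<chi> \<le> size a" using Until.IH(1)[OF 2(2) True] by auto
      thus ?thesis by simp
    next
      case False
      thus ?thesis using 2 Until.prems(2) by auto
    qed
  qed
next
  case (Release a b)
  from Release.prems(1) consider (c1) \<mu>1 A1 \<nu> B where "A = A1 \<union> B" "(\<mu>1,A1)\<in>LF a" "(\<nu>,B)\<in>LF b"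
    | (c2) B where "A = B \<union> {Release a b}" "(\<mu>,B) \<in> LF b" by auto
  thus ?case
  proof cases
    case c1
    show ?thesis
    proof (cases "\<chi> \<in> A1")
      case True
      have "size \<chi> \<le> size a" using Release.IH(1)[OF c1(2) True] by auto
      thus ?thesis by simp
    next
      case False
      hence "\<chi> \<in> B" using c1 Release.prems(2) by auto
      have "size \<chi> \<le> size b" using Release.IH(2)[OF c1(3) \<open>\<chi> \<in> B\<close>] by auto
      thus ?thesis by simp
    qed
  next
    case c2
    show ?thesis
    proof (cases "\<chi> \<in> B")
      case True
      have "size \<chi> \<le> size b" using Release.IH(2)[OF c2(2) True] by auto
      thus ?thesis by simp
    next
      case False
      thus ?thesis using c2 Release.prems(2) by auto
    qed
  qed
qed auto

lemma LF_size_le: "(\<mu>,A) \<in> LF c \<Longrightarrow> \<chi> \<in> A \<Longrightarrow> size \<chi> \<le> size c"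
  using LF_size by fastforce

lemma simp_pp: "A \<in> simp c \<Longrightarrow> A \<subseteq> pderiv_plus c"
  by (induction c arbitrary: A) (auto simp: fc_def)

lemma LF_pp: "(\<mu>,A) \<in> LF c \<Longrightarrow> A \<subseteq> pderiv_plus c"
proof (induction c arbitrary: \<mu> A)
  case (And a b)
  then obtain \<mu>1 A1 \<nu> B where "A = A1 \<union> B" "(\<mu>1,A1)\<in>LF a" "(\<nu>,B)\<in>LF b" by auto
  thus ?case using And.IH by fastforce
next
  case (Until a b)
  from Until.prems(1) consider "(\<mu>,A) \<in> LF b" | A1 where "A = A1 \<union> {Until a b}" "(\<mu>,A1) \<in> LF a" by auto
  thus ?case using Until.IH by cases fastforce+
next
  case (Release a b)
  from Release.prems(1) consider (c1) \<mu>1 A1 \<nu> B where "A = A1 \<union> B" "(\<mu>1,A1)\<in>LF a" "(\<nu>,B)\<in>LF b"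
    | (c2) B where "A = B \<union> {Release a b}" "(\<mu>,B) \<in> LF b" by auto
  thus ?case using Release.IH by cases fastforce+
next
  case (Or a b)
  hence "(\<mu>,A) \<in> LF a \<or> (\<mu>,A) \<in> LF b" by simp
  thus ?case
  proof
    assume h: "(\<mu>,A) \<in> LF a" show ?thesis using Or.IH(1)[OF h] by auto
  next
    assume h: "(\<mu>,A) \<in> LF b" show ?thesis using Or.IH(2)[OF h] by auto
  qed
qed (auto dest: simp_pp)

lemma pp_trans: "\<psi> \<in> pderiv_plus c \<Longrightarrow> pderiv_plus \<psi> \<subseteq> pderiv_plus c"
proof (induction c)
  case (Next a) thus ?case by (cases "\<psi> = Next a") auto
next
  case (Until a b) thus ?case by (cases "\<psi> = Until a b") auto
next
  case (Release a b) thus ?case by (cases "\<psi> = Release a b") auto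
qed auto

lemma pp_temporal: "\<psi> \<in> pderiv_plus c \<Longrightarrow> (\<forall>a b. \<psi> \<noteq> And a b \<and> \<psi> \<noteq> Or a b)"
  by (induction c) auto


lemma path_to:
  assumes run: "is_run A w V E"
  shows "q \<in> V n \<Longrightarrow> \<exists>p. p 0 \<in> V 0 \<and> p n = q \<and> (\<forall>k<n. p (Suc k) \<in> E k (p k))"
proof (induction n arbitrary: q)
  case 0 thus ?case by (auto intro!: exI[of _ "\<lambda>_. q"])
next
  case (Suc n)
  obtain q0 where q0: "q0 \<in> V n" "q \<in> E n q0" using run Suc.prems unfolding is_run_def by blast
  obtain p where p: "p 0 \<in> V 0" "p n = q0" "\<forall>k<n. p (Suc k) \<in> E k (p k)" using Suc.IH[OF q0(1)] by blast
  define p' where "p' = p(Suc n := q)"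
  have "\<forall>k<Suc n. p' (Suc k) \<in> E k (p' k)"
  proof (intro allI impI)
    fix k assume k: "k < Suc n"
    show "p' (Suc k) \<in> E k (p' k)"
    proof (cases "k = n")
      case True thus ?thesis using p q0 by (simp add: p'_def)
    next
      case False thus ?thesis using p k by (simp add: p'_def)
    qed
  qed
  moreover have "p' 0 \<in> V 0" "p' (Suc n) = q" using p by (auto simp: p'_def)
  ultimately show ?case by blast
qed

lemma acc_Until: "Until a b \<notin> acc (ltl_aut I \<phi>)"
  by (simp add: ltl_aut_def is_release_def)

lemma run_sound:
  assumes run: "is_run (ltl_aut I \<phi>) w V E" and accb: "buechi_accepting (ltl_aut I \<phi>) V E"
  shows "\<psi> \<in> V i \<Longrightarrow> sem I w i \<psi>"
proof (induction \<psi> arbitrary: i rule: measure_induct_rule[where f=size])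
  case (less \<psi> i)
  have Vsub: "\<And>i. V i \<subseteq> pderiv_plus \<phi>" using run by (simp add: is_run_def ltl_aut_def)
  have Estep: "\<And>i q. q \<in> V i \<Longrightarrow> E i q \<subseteq> V (Suc i) \<and> (\<exists>\<mu>. (\<mu>, E i q) \<in> LF q \<and> models I (w i) \<mu>)"
    using run by (simp add: is_run_def ltl_aut_def pderiv_def)
  have helper: "\<And>c \<mu> A m. (\<mu>,A) \<in> LF c \<Longrightarrow> A \<subseteq> V (Suc m) \<Longrightarrow> size c < size \<psi> \<Longrightarrow> models I (w m) \<mu> \<Longrightarrow> sem I w m c"
  proof -
    fix c \<mu> A m assume h: "(\<mu>,A) \<in> LF c" "A \<subseteq> V (Suc m)" "size c < size \<psi>" "models I (w m) \<mu>"
    have "\<forall>\<chi>\<in>A. sem I w (Suc m) \<chi>"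
    proof
      fix \<chi> assume "\<chi> \<in> A"
      hence "size \<chi> < size \<psi>" "\<chi> \<in> V (Suc m)" using LF_size_le[OF h(1)] h(2,3) by (auto intro: le_less_trans)
      thus "sem I w (Suc m) \<chi>" using less.IH by blast
    qed
    thus "sem I w m c" using LF_sound h by blast
  qed
  obtain \<mu> where \<mu>: "(\<mu>, E i \<psi>) \<in> LF \<psi>" "models I (w i) \<mu>" and Esub: "E i \<psi> \<subseteq> V (Suc i)"
    using Estep[OF less.prems] by blast
  consider (U) a b where "\<psi> = Until a b" | (R) a b where "\<psi> = Release a b"
    | (O) "\<forall>a b. \<psi> \<noteq> Until a b \<and> \<psi> \<noteq> Release a b" by blast
  then show ?case
  proof cases
    case O
    have "\<forall>\<chi>\<in>E i \<psi>. sem I w (Suc i) \<chi>"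
    proof
      fix \<chi> assume c: "\<chi> \<in> E i \<psi>"
      hence "size \<chi> < size \<psi>" using LF_size[OF \<mu>(1) c] O by blast
      thus "sem I w (Suc i) \<chi>" using less.IH c Esub by blast
    qed
    thus ?thesis using LF_sound \<mu> by blast
  next
    case U
    show ?thesis
    proof (rule ccontr)
      assume nU: "\<not> sem I w i \<psi>"
      have step: "\<And>m. \<psi> \<in> V m \<Longrightarrow> \<not> sem I w m \<psi> \<Longrightarrow> \<psi> \<in> E m \<psi> \<and> \<not> sem I w (Suc m) \<psi>"
      proof -
        fix m assume m: "\<psi> \<in> V m" "\<not> sem I w m \<psi>"
        obtain \<nu> where \<nu>: "(\<nu>, E m \<psi>) \<in> LF \<psi>" "models I (w m) \<nu>" and Es: "E m \<psi> \<subseteq> V (Suc m)"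
          using Estep[OF m(1)] by blast
        from \<nu>(1) U consider "(\<nu>, E m \<psi>) \<in> LF b" | A1 where "E m \<psi> = A1 \<union> {\<psi>}" "(\<nu>,A1) \<in> LF a"
          by auto
        thus "\<psi> \<in> E m \<psi> \<and> \<not> sem I w (Suc m) \<psi>"
        proof cases
          case 1
          have s2: "size b < size \<psi>" using U by simp
          have "sem I w m b" using helper[OF 1 Es s2 \<nu>(2)] .
          hence False using m(2) U sem_Until_unfold by metis
          thus ?thesis ..
        next
          case (2 A1)
          have s1: "A1 \<subseteq> V (Suc m)" using 2(1) Es by auto
          have s2: "size a < size \<psi>" using U by simp
          have "sem I w m a" using helper[OF 2(2) s1 s2 \<nu>(2)] .
          moreover have "\<psi> \<in> E m \<psi>" using 2(1) by simp
          moreover have "\<not> sem I w (Suc m) \<psi>"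
          proof
            assume "sem I w (Suc m) \<psi>"
            hence "sem I w m \<psi>" using \<open>sem I w m a\<close> U sem_Until_unfold by metis
            thus False using m(2) by simp
          qed
          ultimately show ?thesis by simp
        qed
      qed
      have inv: "\<And>n. \<psi> \<in> V (i+n) \<and> \<not> sem I w (i+n) \<psi>"
      proof -
        fix n show "\<psi> \<in> V (i+n) \<and> \<not> sem I w (i+n) \<psi>"
        proof (induction n)
          case 0 thus ?case using less.prems nU by simp
        next
          case (Suc n)
          thus ?case using step[of "i+n"] Estep[of \<psi> "i+n"] by auto
        qed
      qed
      obtain p where p: "p 0 \<in> V 0" "p i = \<psi>" "\<forall>k<i. p (Suc k) \<in> E k (p k)"
        using path_to[OF run less.prems] by blast
      define p' where "p' k = (if k \<le> i then p k else \<psi>)" for k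
      have "is_path V E p'"
        unfolding is_path_def
      proof
        show "p' 0 \<in> V 0" using p by (simp add: p'_def)
        show "\<forall>k. p' (Suc k) \<in> E k (p' k)"
        proof
          fix k
          show "p' (Suc k) \<in> E k (p' k)"
          proof (cases "k < i")
            case True thus ?thesis using p by (simp add: p'_def)
          next
            case False
            have "p' k = \<psi>" using p False by (simp add: p'_def)
            moreover have "p' (Suc k) = \<psi>" using False by (simp add: p'_def)
            moreover have "\<psi> \<in> E k \<psi>" using inv[of "k - i"] step[of k] False by simp
            ultimately show ?thesis by simp
          qed
        qed
      qed
      hence "\<exists>\<^sub>\<infinity>k. p' k \<in> acc (ltl_aut I \<phi>)" using accb by (simp add: buechi_accepting_def)
      hence "\<exists>k\<ge>Suc i. p' k \<in> acc (ltl_aut I \<phi>)" by (simp add: cofinite_eq_sequentially frequently_sequentially)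
      then obtain k where "k > i" "p' k \<in> acc (ltl_aut I \<phi>)" by (auto simp: Suc_le_eq)
      hence "Until a b \<in> acc (ltl_aut I \<phi>)" using U by (simp add: p'_def)
      thus False using acc_Until by blast
    qed
  next
    case R
    have step: "\<And>m. \<psi> \<in> V m \<Longrightarrow> sem I w m b \<and> (sem I w m a \<or> \<psi> \<in> V (Suc m))"
    proof -
      fix m assume m: "\<psi> \<in> V m"
      obtain \<nu> where \<nu>: "(\<nu>, E m \<psi>) \<in> LF \<psi>" "models I (w m) \<nu>" and Es: "E m \<psi> \<subseteq> V (Suc m)"
        using Estep[OF m(1)] by blast
      from \<nu>(1) R consider (c1) \<mu>1 A1 \<nu>1 B where "\<nu> = meet \<mu>1 \<nu>1" "E m \<psi> = A1 \<union> B" "(\<mu>1,A1)\<in>LF a" "(\<nu>1,B)\<in>LF b"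
        | (c2) B where "E m \<psi> = B \<union> {\<psi>}" "(\<nu>,B) \<in> LF b" by auto
      thus "sem I w m b \<and> (sem I w m a \<or> \<psi> \<in> V (Suc m))"
      proof cases
        case c1
        have "models I (w m) \<mu>1" "models I (w m) \<nu>1" using c1(1) \<nu>(2) by (simp_all add: models_meet)
        have s1: "A1 \<subseteq> V (Suc m)" "B \<subseteq> V (Suc m)" using c1(2) Es by auto
        have s2: "size a < size \<psi>" "size b < size \<psi>" using R by simp_all
        have "sem I w m a" using helper[OF c1(3) s1(1) s2(1) \<open>models I (w m) \<mu>1\<close>] .
        moreover have "sem I w m b" using helper[OF c1(4) s1(2) s2(2) \<open>models I (w m) \<nu>1\<close>] .
        ultimately show ?thesis by simp
      next
        case c2
        have s1: "B \<subseteq> V (Suc m)" using c2(1) Es by auto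
        have s2: "size b < size \<psi>" using R by simp
        have "sem I w m b" using helper[OF c2(2) s1 s2 \<nu>(2)] .
        moreover have "\<psi> \<in> V (Suc m)" using c2(1) Es by auto
        ultimately show ?thesis by simp
      qed
    qed
    have C: "\<And>n. ((\<forall>j. i \<le> j \<and> j < i+n \<longrightarrow> sem I w j b) \<and> \<psi> \<in> V (i+n))
        \<or> (\<exists>k. i \<le> k \<and> k < i+n \<and> sem I w k a \<and> (\<forall>j. i \<le> j \<and> j \<le> k \<longrightarrow> sem I w j b))"
    proof -
      fix n show "((\<forall>j. i \<le> j \<and> j < i+n \<longrightarrow> sem I w j b) \<and> \<psi> \<in> V (i+n))
        \<or> (\<exists>k. i \<le> k \<and> k < i+n \<and> sem I w k a \<and> (\<forall>j. i \<le> j \<and> j \<le> k \<longrightarrow> sem I w j b))"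
      proof (induction n)
        case 0 thus ?case using less.prems by auto
      next
        case (Suc n)
        from Suc.IH show ?case
        proof
          assume h: "(\<forall>j. i \<le> j \<and> j < i+n \<longrightarrow> sem I w j b) \<and> \<psi> \<in> V (i+n)"
          hence st: "sem I w (i+n) b \<and> (sem I w (i+n) a \<or> \<psi> \<in> V (Suc (i+n)))" using step by blast
          have bb: "\<forall>j. i \<le> j \<and> j \<le> i+n \<longrightarrow> sem I w j b"
            using h st by (metis le_eq_less_or_eq)
          show ?case
          proof (cases "sem I w (i+n) a")
            case True
            hence "\<exists>k. i \<le> k \<and> k < i+Suc n \<and> sem I w k a \<and> (\<forall>j. i \<le> j \<and> j \<le> k \<longrightarrow> sem I w j b)"
              using bb by (intro exI[of _ "i+n"]) simp
            thus ?thesis ..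
          next
            case False
            hence "\<psi> \<in> V (i + Suc n)" using st by simp
            moreover have "\<forall>j. i \<le> j \<and> j < i+Suc n \<longrightarrow> sem I w j b" using bb by simp
            ultimately show ?thesis by blast
          qed
        next
          assume "\<exists>k. i \<le> k \<and> k < i+n \<and> sem I w k a \<and> (\<forall>j. i \<le> j \<and> j \<le> k \<longrightarrow> sem I w j b)"
          hence "\<exists>k. i \<le> k \<and> k < i+Suc n \<and> sem I w k a \<and> (\<forall>j. i \<le> j \<and> j \<le> k \<longrightarrow> sem I w j b)"
            by (metis less_SucI add_Suc_right)
          thus ?thesis ..
        qed
      qed
    qed
    have "\<forall>j\<ge>i. sem I w j b \<or> (\<exists>k. i \<le> k \<and> k < j \<and> sem I w k a)"
    proof (intro allI impI)
      fix j assume j: "i \<le> j"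
      have e: "i + (Suc j - i) = Suc j" using j by simp
      from C[of "Suc j - i"] show "sem I w j b \<or> (\<exists>k. i \<le> k \<and> k < j \<and> sem I w k a)"
        unfolding e
      proof
        assume "(\<forall>ja. i \<le> ja \<and> ja < Suc j \<longrightarrow> sem I w ja b) \<and> \<psi> \<in> V (Suc j)"
        thus ?thesis using j by simp
      next
        assume "\<exists>k. i \<le> k \<and> k < Suc j \<and> sem I w k a \<and> (\<forall>ja. i \<le> ja \<and> ja \<le> k \<longrightarrow> sem I w ja b)"
        then obtain k where k: "i \<le> k" "k < Suc j" "sem I w k a" "\<forall>ja. i \<le> ja \<and> ja \<le> k \<longrightarrow> sem I w ja b" by blast
        show ?thesis
        proof (cases "k = j")
          case True thus ?thesis using k by simp
        next
          case False thus ?thesis using k by auto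
        qed
      qed
    qed
    thus ?thesis using R by simp
  qed
qed


definition sel_prop :: "('x \<Rightarrow> 'p set) \<Rightarrow> (nat \<Rightarrow> 'x) \<Rightarrow> nat \<Rightarrow> 'p ltl \<Rightarrow> 'p fconj \<Rightarrow> bool" where
  "sel_prop I w i q A \<longleftrightarrow> (\<exists>\<mu>. (\<mu>,A) \<in> LF q \<and> models I (w i) \<mu>) \<and> (\<forall>\<chi>\<in>A. sem I w (Suc i) \<chi>)
     \<and> (\<forall>a b. q = Until a b \<longrightarrow> sem I w i b \<longrightarrow> Until a b \<notin> A)"

definition sel :: "('x \<Rightarrow> 'p set) \<Rightarrow> (nat \<Rightarrow> 'x) \<Rightarrow> nat \<Rightarrow> 'p ltl \<Rightarrow> 'p fconj" where
  "sel I w i q = (SOME A. sel_prop I w i q A)"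

lemma sel_ex: "sem I w i q \<Longrightarrow> \<exists>A. sel_prop I w i q A"
proof (cases "\<exists>a b. q = Until a b \<and> sem I w i b")
  case True
  then obtain a b where q: "q = Until a b" and sb: "sem I w i b" by blast
  obtain \<nu> B where B: "(\<nu>,B) \<in> LF b" "models I (w i) \<nu>" "\<forall>\<chi>\<in>B. sem I w (Suc i) \<chi>"
    using LF_complete[OF sb] by blast
  have nB: "Until a b \<notin> B"
  proof
    assume "Until a b \<in> B"
    from LF_size_le[OF B(1) this] show False by simp
  qed
  have "sel_prop I w i q B"
    unfolding sel_prop_def using B nB q LF_Until_mem1[OF B(1), of a] by blast
  thus ?thesis ..
next
  case False
  assume sq: "sem I w i q"
  obtain \<mu> A where A: "(\<mu>,A) \<in> LF q" "models I (w i) \<mu>" "\<forall>\<chi>\<in>A. sem I w (Suc i) \<chi>"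
    using LF_complete[OF sq] by blast
  have "sel_prop I w i q A"
    unfolding sel_prop_def using A False by blast
  thus ?thesis ..
qed

lemma sel_good: "sem I w i q \<Longrightarrow> sel_prop I w i q (sel I w i q)"
  unfolding sel_def by (rule someI_ex, rule sel_ex)

fun runV :: "('x \<Rightarrow> 'p set) \<Rightarrow> (nat \<Rightarrow> 'x) \<Rightarrow> 'p ltl \<Rightarrow> nat \<Rightarrow> 'p ltl set" where
  "runV I w \<phi> 0 = (SOME A. A \<in> simp \<phi> \<and> (\<forall>\<chi>\<in>A. sem I w 0 \<chi>))"
| "runV I w \<phi> (Suc n) = (\<Union>q\<in>runV I w \<phi> n. sel I w n q)"

lemma runV0: "sem I w 0 \<phi> \<Longrightarrow> runV I w \<phi> 0 \<in> simp \<phi> \<and> (\<forall>\<chi>\<in>runV I w \<phi> 0. sem I w 0 \<chi>)"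
proof -
  assume h: "sem I w 0 \<phi>"
  have "\<exists>A. A \<in> simp \<phi> \<and> (\<forall>\<chi>\<in>A. sem I w 0 \<chi>)" using simp_complete[OF h] by blast
  from someI_ex[OF this] show ?thesis by simp
qed

lemma runV_inv: "sem I w 0 \<phi> \<Longrightarrow> (\<forall>\<chi>\<in>runV I w \<phi> n. sem I w n \<chi>) \<and> runV I w \<phi> n \<subseteq> pderiv_plus \<phi>"
proof (induction n)
  case 0
  thus ?case using runV0[OF 0] simp_pp by blast
next
  case (Suc n)
  have "\<forall>\<chi>\<in>runV I w \<phi> (Suc n). sem I w (Suc n) \<chi>"
  proof
    fix \<chi> assume "\<chi> \<in> runV I w \<phi> (Suc n)"
    then obtain q where q: "q \<in> runV I w \<phi> n" "\<chi> \<in> sel I w n q" by auto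
    have "sem I w n q" using Suc q(1) by blast
    from sel_good[OF this] q(2) show "sem I w (Suc n) \<chi>" unfolding sel_prop_def by blast
  qed
  moreover have "runV I w \<phi> (Suc n) \<subseteq> pderiv_plus \<phi>"
  proof
    fix \<chi> assume "\<chi> \<in> runV I w \<phi> (Suc n)"
    then obtain q where q: "q \<in> runV I w \<phi> n" "\<chi> \<in> sel I w n q" by auto
    have "sem I w n q" using Suc q(1) by blast
    from sel_good[OF this] obtain \<mu> where "(\<mu>, sel I w n q) \<in> LF q" unfolding sel_prop_def by blast
    hence "\<chi> \<in> pderiv_plus q" using LF_pp q(2) by blast
    moreover have "q \<in> pderiv_plus \<phi>" using Suc q(1) by blast
    ultimately show "\<chi> \<in> pderiv_plus \<phi>" using pp_trans by blast
  qed
  ultimately show ?case by blast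
qed

lemma run_complete:
  assumes h: "sem I w 0 \<phi>"
  shows "is_run (ltl_aut I \<phi>) w (runV I w \<phi>) (\<lambda>i q. sel I w i q)
       \<and> buechi_accepting (ltl_aut I \<phi>) (runV I w \<phi>) (\<lambda>i q. sel I w i q)"
proof
  let ?V = "runV I w \<phi>"
  have inv: "\<And>n. (\<forall>\<chi>\<in>?V n. sem I w n \<chi>) \<and> ?V n \<subseteq> pderiv_plus \<phi>" using runV_inv[OF h] by blast
  have tr: "\<And>i q. q \<in> ?V i \<Longrightarrow> sel I w i q \<in> pderiv I (w i) q"
  proof -
    fix i q assume "q \<in> ?V i"
    hence "sem I w i q" using inv by blast
    from sel_good[OF this] show "sel I w i q \<in> pderiv I (w i) q"
      unfolding sel_prop_def pderiv_def by blast
  qed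
  show "is_run (ltl_aut I \<phi>) w ?V (\<lambda>i q. sel I w i q)"
    unfolding is_run_def ltl_aut_def
    using runV0[OF h] inv tr by auto
  show "buechi_accepting (ltl_aut I \<phi>) ?V (\<lambda>i q. sel I w i q)"
    unfolding buechi_accepting_def
  proof (intro allI impI)
    fix p assume "is_path ?V (\<lambda>i q. sel I w i q) p"
    hence p0: "p 0 \<in> ?V 0" and ps: "\<And>i. p (Suc i) \<in> sel I w i (p i)" by (auto simp: is_path_def)
    have pV: "\<And>i. p i \<in> ?V i"
    proof -
      fix i show "p i \<in> ?V i"
        by (induction i) (use p0 ps in auto)
    qed
    have psem: "\<And>i. sem I w i (p i)" using pV inv by blast
    have pLF: "\<And>i. \<exists>\<mu>. (\<mu>, sel I w i (p i)) \<in> LF (p i)"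
      using sel_good[OF psem] unfolding sel_prop_def by blast
    have mono: "\<And>i. size (p (Suc i)) \<le> size (p i)"
      using pLF ps LF_size_le by blast
    define m where "m = (LEAST s. \<exists>i. size (p i) = s)"
    obtain N where N: "size (p N) = m" unfolding m_def using LeastI_ex[of "\<lambda>s. \<exists>i. size (p i) = s"] by blast
    have mle: "\<And>i. m \<le> size (p i)" unfolding m_def by (rule Least_le) blast
    have const: "\<And>k. p (N+k) = p N"
    proof -
      fix k show "p (N+k) = p N"
      proof (induction k)
        case 0 thus ?case by simp
      next
        case (Suc k)
        obtain \<mu> where \<mu>: "(\<mu>, sel I w (N+k) (p N)) \<in> LF (p N)" using pLF[of "N+k"] Suc by auto
        have mem: "p (N + Suc k) \<in> sel I w (N+k) (p N)" using ps[of "N+k"] Suc by simp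
        from LF_size[OF \<mu> mem] show ?case using mle[of "N + Suc k"] N by auto
      qed
    qed
    let ?q = "p N"
    obtain \<mu> where \<mu>: "(\<mu>, sel I w N ?q) \<in> LF ?q" using pLF by blast
    have "?q \<in> sel I w N ?q" using ps[of N] const[of 1] by simp
    from LF_size[OF \<mu> this] obtain a b where ab: "?q = Until a b \<or> ?q = Release a b" by auto
    show "\<exists>\<^sub>\<infinity>i. p i \<in> acc (ltl_aut I \<phi>)"
    proof (cases "?q = Release a b")
      case True
      have "?q \<in> acc (ltl_aut I \<phi>)" using True pV[of N] inv[of N] by (auto simp: ltl_aut_def is_release_def)
      hence "\<forall>M. \<exists>n\<ge>M. p n \<in> acc (ltl_aut I \<phi>)" using const by (metis le_add2)
      thus ?thesis by (simp add: cofinite_eq_sequentially frequently_sequentially)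
    next
      case False
      hence U: "?q = Until a b" using ab by blast
      have "sem I w N (Until a b)" using psem[of N] U by simp
      then obtain j where j: "j \<ge> N" "sem I w j b" by auto
      have pj: "p j = ?q" using const[of "j - N"] j(1) by simp
      have pj1: "p (Suc j) = ?q" using const[of "Suc j - N"] j(1) by (simp add: Suc_diff_le)
      have pjU: "p j = Until a b" using pj U by simp
      have "\<forall>a' b'. p j = Until a' b' \<longrightarrow> sem I w j b' \<longrightarrow> Until a' b' \<notin> sel I w j (p j)"
        using sel_good[OF psem[of j]] unfolding sel_prop_def by blast
      hence "Until a b \<notin> sel I w j (p j)" using pjU j(2) by blast
      moreover have "Until a b \<in> sel I w j (p j)" using ps[of j] pj1 U by simp
      ultimately show ?thesis by blast
    qed
  qed
qed

theorem theorem3: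
  fixes I :: "'x \<Rightarrow> 'p set" and \<phi> :: "'p ltl"
  shows "ltl_lang I \<phi> = aut_lang (ltl_aut I \<phi>)"
proof
  show "ltl_lang I \<phi> \<subseteq> aut_lang (ltl_aut I \<phi>)"
    unfolding ltl_lang_def aut_lang_def using run_complete by blast
  show "aut_lang (ltl_aut I \<phi>) \<subseteq> ltl_lang I \<phi>"
  proof
    fix w assume "w \<in> aut_lang (ltl_aut I \<phi>)"
    then obtain V E where r: "is_run (ltl_aut I \<phi>) w V E" and a: "buechi_accepting (ltl_aut I \<phi>) V E"
      unfolding aut_lang_def by blast
    have "V 0 \<in> simp \<phi>" using r by (simp add: is_run_def ltl_aut_def)
    moreover have "\<forall>\<chi>\<in>V 0. sem I w 0 \<chi>" using run_sound[OF r a] by blast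
    ultimately have "sem I w 0 \<phi>" using simp_sound by blast
    thus "w \<in> ltl_lang I \<phi>" by (simp add: ltl_lang_def)
  qed
qed

end
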